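(* Consider the multiset combinatorial auction model described in the context. Fix any constant number $k\in\mathbb{N}$ of value queries (with $k\ll 2^m$). Compare two auctions, each of which outputs an allocation solving the winner determination problem (WDP) on the bidders' truthful reports: (A) each bidder is asked $k$ value queries for distinct bundles chosen uniformly at random from $\mathcal{X}$; (B) each bidder is asked a single demand query at a random price vector whose item prices are i.i.d. nonnegative random variables with a finite positive mean. Then the expected social welfare of auction (B) can be arbitrarily larger than that of auction (A): for every $K>0$ there exists an instance (items, capacities, bidders and value functions) for which the expected social welfare of the allocation of (B) is at least $K$ times the expected social welfare of the allocation of (A).
   Context: Multiset combinatorial auction: bidders $N=\{1,\dots,n\}$, items $M=\{1,\dots,m\}$ with capacities $c=(c_1,\dots,c_m)\in\mathbb{N}^m$. Bundles are vectors $x\in\mathcal{X}=\{0,\dots,c_1\}\times\cdots\times\{0,\dots,c_m\}$ ($x_j$ = number of copies of item $j$). Each bidder $i$ has a private value function $v_i:\mathcal{X}\to\mathbb{R}_{\ge0}$. An allocation $a=(a_1,\dots,a_n)\in\mathcal{X}^n$ is feasible if $\sum_{i}a_{ij}\le c_j$ for all $j$; $\mathcal{F}$ denotes the set of feasible allocations. The social welfare of $a$ is $V(a)=\sum_i v_i(a_i)$, and its efficiency is $V(a)/\max_{a'\in\mathcal{F}}V(a')$. A demand query with price vector $p\in\mathbb{R}^m_{\ge0}$ asks bidder $i$ to report a bundle $x_i^*(p)\in\arg\max_{x\in\mathcal{X}}\{v_i(x)-\langle p,x\rangle\}$. A value query for bundle $x$ asks bidder $i$ to report $v_i(x)$. Bidder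 $i$'s reports $R_i$ consist of her demand-query responses $R_i^{DQ}$ (pairs $(x,p)$) and value-query responses $R_i^{VQ}$ (pairs $(x,v_i(x))$). Her inferred value for $x$ is $\tilde v_i(x;R_i)=v_i(x)$ if $x$ appears in $R_i^{VQ}$, and otherwise $\max\left(\{\langle x,p\rangle:(x,p)\in R_i^{DQ}\}\cup\{0\}\right)$. The WDP selects $a^*(R)\in\arg\max_{a\in\mathcal{F}}\sum_{i\in N}\tilde v_i(a_i;R_i)$. *)

theory Defs
  imports "HOL-Probability.Probability"
begin

text \<open>A bundle is a function
  nat => nat, x j = number of copies of item j, with x j <= c j for j < m and
  x j = 0 for j >= m (so the bundle space X is finite).\<close>

definition bundles :: "nat \<Rightarrow> (nat \<Rightarrow> nat) \<Rightarrow> (nat \<Rightarrow> nat) set" where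
  "bundles m c = {x. (\<forall>j<m. x j \<le> c j) \<and> (\<forall>j. m \<le> j \<longrightarrow> x j = 0)}"

definition valuations :: "nat \<Rightarrow> nat \<Rightarrow> (nat \<Rightarrow> nat) \<Rightarrow> (nat \<Rightarrow> (nat \<Rightarrow> nat) \<Rightarrow> real) \<Rightarrow> bool" where
  "valuations n m c v = (\<forall>i<n. \<forall>x\<in>bundles m c. 0 \<le> v i x)"

definition feasible :: "nat \<Rightarrow> nat \<Rightarrow> (nat \<Rightarrow> nat) \<Rightarrow> (nat \<Rightarrow> nat \<Rightarrow> nat) \<Rightarrow> bool" where
  "feasible n m c a = ((\<forall>i<n. a i \<in> bundles m c) \<and> (\<forall>i. n \<le> i \<longrightarrow> a i = (\<lambda>_. 0))
      \<and> (\<forall>j<m. (\<Sum>i<n. a i j) \<le> c j))"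

definition welfare :: "nat \<Rightarrow> (nat \<Rightarrow> (nat \<Rightarrow> nat) \<Rightarrow> real) \<Rightarrow> (nat \<Rightarrow> nat \<Rightarrow> nat) \<Rightarrow> real" where
  "welfare n v a = (\<Sum>i<n. v i (a i))"

definition price_of :: "nat \<Rightarrow> (nat \<Rightarrow> nat) \<Rightarrow> (nat \<Rightarrow> real) \<Rightarrow> real" where
  "price_of m x p = (\<Sum>j<m. real (x j) * p j)"

text \<open>Inferred value from demand-query reports RDQ (pairs (x,p)) and
  value-query reports RVQ (pairs (x, v x)).\<close>
definition inferred_value :: "nat \<Rightarrow> ((nat \<Rightarrow> nat) \<times> (nat \<Rightarrow> real)) set
     \<Rightarrow> ((nat \<Rightarrow> nat) \<times> real) set \<Rightarrow> (nat \<Rightarrow> nat) \<Rightarrow> real" where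
  "inferred_value m RDQ RVQ x =
     (if x \<in> fst ` RVQ then (THE r. (x, r) \<in> RVQ)
      else Max ((\<lambda>q. price_of m (fst q) (snd q)) ` {q \<in> RDQ. fst q = x} \<union> {0}))"

definition vq_reports :: "((nat \<Rightarrow> nat) \<Rightarrow> real) \<Rightarrow> (nat \<Rightarrow> nat) set \<Rightarrow> ((nat \<Rightarrow> nat) \<times> real) set" where
  "vq_reports w Q = (\<lambda>x. (x, w x)) ` Q"

definition wdp_solution :: "nat \<Rightarrow> nat \<Rightarrow> (nat \<Rightarrow> nat) \<Rightarrow> (nat \<Rightarrow> (nat \<Rightarrow> nat) \<Rightarrow> real)
     \<Rightarrow> (nat \<Rightarrow> nat \<Rightarrow> nat) \<Rightarrow> bool" where
  "wdp_solution n m c vt a = (feasible n m c a \<and>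
     (\<forall>a'. feasible n m c a' \<longrightarrow> (\<Sum>i<n. vt i (a' i)) \<le> (\<Sum>i<n. vt i (a i))))"

definition demand_set :: "nat \<Rightarrow> (nat \<Rightarrow> nat) \<Rightarrow> ((nat \<Rightarrow> nat) \<Rightarrow> real) \<Rightarrow> (nat \<Rightarrow> real)
     \<Rightarrow> (nat \<Rightarrow> nat) set" where
  "demand_set m c w p = {x \<in> bundles m c.
     \<forall>y\<in>bundles m c. w y - price_of m y p \<le> w x - price_of m x p}"

text \<open>Auction (A): each bidder i < n independently gets a uniformly random
  k-element set of distinct bundles; the outcome space is the finite set of
  query profiles, with the uniform distribution.\<close>
definition query_profiles :: "nat \<Rightarrow> nat \<Rightarrow> (nat \<Rightarrow> nat) \<Rightarrow> nat \<Rightarrow> (nat \<Rightarrow> (nat \<Rightarrow> nat) set) set" where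
  "query_profiles n m c k = PiE {..<n} (\<lambda>_. {Q. Q \<subseteq> bundles m c \<and> card Q = k})"

definition expected_welfare_A :: "nat \<Rightarrow> nat \<Rightarrow> (nat \<Rightarrow> nat) \<Rightarrow> nat
     \<Rightarrow> (nat \<Rightarrow> (nat \<Rightarrow> nat) \<Rightarrow> real) \<Rightarrow> ((nat \<Rightarrow> (nat \<Rightarrow> nat) set) \<Rightarrow> (nat \<Rightarrow> nat \<Rightarrow> nat)) \<Rightarrow> real" where
  "expected_welfare_A n m c k v selA =
     (\<Sum>Q\<in>query_profiles n m c k. welfare n v (selA Q)) / real (card (query_profiles n m c k))"

definition price_dist :: "nat \<Rightarrow> real measure \<Rightarrow> (nat \<Rightarrow> real) measure" where
  "price_dist m D = PiM {..<m} (\<lambda>_. D)"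

end

theory Submission
  imports Defs
begin

lemma pos_interval:
  fixes D :: "real measure"
  assumes "prob_space D" and "sets D = sets borel"
    and "AE x in D. 0 \<le> x"
    and "integrable D (\<lambda>x. x)" and "0 < (\<integral>x. x \<partial>D)"
  shows "\<exists>t::real. 0 < t \<and> 0 < measure D {0<..<t}"
proof (rule ccontr)
  assume H: "\<not> ?thesis"
  interpret prob_space D by fact
  have meas: "{0<..<t} \<in> sets D" for t :: real using assms(2) by simp
  have null: "{0<..<real n} \<in> null_sets D" for n
  proof (cases "n = 0")
    case True then show ?thesis by simp
  next
    case False
    then have "\<not> 0 < measure D {0<..<real n}" using H by auto
    then have "measure D {0<..<real n} = 0" using measure_nonneg[of D] by (meson linorder_neqE_linordered_idom not_less)
    then show ?thesis using meas by (simp add: emeasure_eq_measure null_sets_def)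
  qed
  have "(\<Union>n. {0<..<real n}) \<in> null_sets D" using null by blast
  then have "AE x in D. x \<le> 0"
  proof (rule AE_I')
    show "{x \<in> space D. \<not> x \<le> 0} \<subseteq> (\<Union>n. {0<..<real n})"
      using reals_Archimedean2 by fastforce
  qed
  with assms(3) have "AE x in D. x = 0" by eventually_elim auto
  then have "(\<integral>x. x \<partial>D) = 0" using integral_nonneg_eq_0_iff_AE[OF assms(4) assms(3)] by simp
  with assms(5) show False by simp
qed

lemma price_event:
  fixes D :: "real measure"
  assumes "prob_space D" and "sets D = sets borel"
  shows "{p \<in> space (price_dist 1 D). p 0 \<in> {0<..<t}} \<in> sets (price_dist 1 D)
    \<and> emeasure (price_dist 1 D) {p \<in> space (price_dist 1 D). p 0 \<in> {0<..<t}} = emeasure D {0<..<t}"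
proof -
  have d: "distr (price_dist 1 D) D (\<lambda>\<omega>. \<omega> 0) = D"
    unfolding price_dist_def by (rule distr_PiM_component) (use assms(1) in auto)
  have mc: "(\<lambda>\<omega>. \<omega> 0) \<in> measurable (price_dist 1 D) D"
    unfolding price_dist_def by (rule measurable_component_singleton) simp
  have s: "{0<..<t} \<in> sets D" using assms(2) by simp
  have e: "{p \<in> space (price_dist 1 D). p 0 \<in> {0<..<t}} = (\<lambda>\<omega>. \<omega> 0) -` {0<..<t} \<inter> space (price_dist 1 D)" by auto
  show ?thesis
  proof
    show "{p \<in> space (price_dist 1 D). p 0 \<in> {0<..<t}} \<in> sets (price_dist 1 D)"
      unfolding e using mc s by (rule measurable_sets)
    have "emeasure D {0<..<t} = emeasure (distr (price_dist 1 D) D (\<lambda>\<omega>. \<omega> 0)) {0<..<t}" using d by simp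
    also have "\<dots> = emeasure (price_dist 1 D) ((\<lambda>\<omega>. \<omega> 0) -` {0<..<t} \<inter> space (price_dist 1 D))"
      using mc s by (rule emeasure_distr)
    finally show "emeasure (price_dist 1 D) {p \<in> space (price_dist 1 D). p 0 \<in> {0<..<t}} = emeasure D {0<..<t}"
      unfolding e by simp
  qed
qed

lemma bundles1: "bundles 1 (\<lambda>_. C) = (\<lambda>n j. if j = 0 then n else 0) ` {0..C}"
  unfolding bundles_def by (auto simp: image_iff fun_eq_iff) 

lemma bundles1_card: "finite (bundles 1 (\<lambda>_. C)) \<and> card (bundles 1 (\<lambda>_. C)) = Suc C"
proof -
  have inj: "inj_on (\<lambda>n j. if j = 0 then n else (0::nat)) {0..C}"
    by (auto simp: inj_on_def fun_eq_iff)
  show ?thesis unfolding bundles1 using card_image[OF inj] by simp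
qed

lemma averaging:
  fixes P :: "(nat \<Rightarrow> 'a set) set"
  assumes "finite P" "finite B" "\<And>Q. Q \<in> P \<Longrightarrow> Q 0 \<subseteq> B \<and> card (Q 0) = k"
    and "S \<subseteq> B" "card S = C" "0 < C"
  shows "\<exists>a\<in>S. real (card {Q\<in>P. a \<in> Q 0}) * real C \<le> real k * real (card P)"
proof (rule ccontr)
  assume H: "\<not> ?thesis"
  have fS: "finite S" using assms(2,4) finite_subset by blast
  have "(\<Sum>a\<in>S. card {Q\<in>P. a \<in> Q 0}) = (\<Sum>a\<in>S. \<Sum>Q\<in>P. if a \<in> Q 0 then 1 else (0::nat))"
    using assms(1) by (simp add: sum.If_cases Int_def)
  also have "\<dots> = (\<Sum>Q\<in>P. \<Sum>a\<in>S. if a \<in> Q 0 then 1 else (0::nat))" by (rule sum.swap)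
  also have "\<dots> = (\<Sum>Q\<in>P. card (S \<inter> Q 0))" using fS by (simp add: sum.If_cases)
  also have "\<dots> \<le> (\<Sum>Q\<in>P. k)"
  proof (rule sum_mono)
    fix Q assume "Q \<in> P"
    then show "card (S \<inter> Q 0) \<le> k" using assms(3)[of Q] assms(2)
      by (metis card_mono finite_subset inf_le2)
  qed
  finally have "(\<Sum>a\<in>S. card {Q\<in>P. a \<in> Q 0}) \<le> card P * k" by simp
  then have le: "real (\<Sum>a\<in>S. card {Q\<in>P. a \<in> Q 0}) \<le> real k * real (card P)"
    by (simp only: of_nat_le_iff flip: of_nat_mult) (simp add: mult.commute)
  have "real k * real (card P) * real C < (\<Sum>a\<in>S. real (card {Q\<in>P. a \<in> Q 0}) * real C)"
  proof -
    have "(\<Sum>a\<in>S. real k * real (card P)) < (\<Sum>a\<in>S. real (card {Q\<in>P. a \<in> Q 0}) * real C)"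
      using H fS assms(5,6) by (intro sum_strict_mono) (auto simp: not_le)
    then show ?thesis using assms(5) by (simp add: mult.commute)
  qed
  also have "\<dots> = real (\<Sum>a\<in>S. card {Q\<in>P. a \<in> Q 0}) * real C" by (simp add: sum_distrib_right)
  also have "\<dots> \<le> real k * real (card P) * real C" using le by (simp add: mult_right_mono)
  finally show False by simp
qed


lemma iv_vq: "inferred_value m {} (vq_reports w Q) x = (if x \<in> Q then w x else 0)"
proof -
  have f: "fst ` vq_reports w Q = Q" unfolding vq_reports_def by (simp add: image_image)
  show ?thesis
  proof (cases "x \<in> Q")
    case True
    have "(THE r. (x, r) \<in> vq_reports w Q) = w x"
      by (rule the_equality) (auto simp: vq_reports_def True)
    then show ?thesis using True f by (simp add: inferred_value_def)
  next
    case False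
    then show ?thesis using f by (simp add: inferred_value_def)
  qed
qed

lemma iv_dq: "inferred_value m {(y,p)} {} x = (if x = y then max (price_of m y p) 0 else 0)"
proof (cases "x = y")
  case True
  have "{q \<in> {(y, p)}. fst q = x} = {(y,p)}" using True by auto
  then show ?thesis using True by (simp add: inferred_value_def)
next
  case False
  have "{q. q = (y, p) \<and> fst q = x} = {}" using False by auto
  then show ?thesis using False by (simp add: inferred_value_def del: Collect_empty_eq) 
qed

lemma feas1: "q \<in> bundles 1 c \<Longrightarrow> feasible 1 1 c (\<lambda>i. if i < 1 then q else (\<lambda>_. 0))"
  unfolding feasible_def bundles_def by auto

lemma wdp1: "wdp_solution 1 1 c vt s \<Longrightarrow> q \<in> bundles 1 c \<Longrightarrow> vt 0 q \<le> vt 0 (s 0) \<and> s 0 \<in> bundles 1 c"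
  unfolding wdp_solution_def using feas1[of q c]
  by (auto simp: feasible_def dest!: spec[of _ "\<lambda>i. if i < 1 then q else (\<lambda>_. 0)"])

lemma welfare1: "welfare 1 v s = v 0 (s 0)" by (simp add: welfare_def)

lemma price1: "price_of 1 x p = real (x 0) * p 0" by (simp add: price_of_def)

lemma demand1:
  fixes t V :: real
  assumes "x \<in> demand_set 1 c (\<lambda>x. if x = a then V else 1) p" "a \<in> bundles 1 c"
    "c 0 = C" "V = 1 + t * real C" "0 < p 0" "p 0 < t" "1 \<le> a 0"
  shows "x = a"
proof (rule ccontr)
  assume ne: "x \<noteq> a"
  from assms(1,2) have "V - price_of 1 a p \<le> 1 - price_of 1 x p"
    unfolding demand_set_def using ne by (auto dest!: bspec[of _ _ a])
  then have 1: "V - real (a 0) * p 0 \<le> 1 - real (x 0) * p 0" by (simp add: price_of_def)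
  have a0: "a 0 \<le> C" using assms(2,3) by (simp add: bundles_def)
  have 2: "real (a 0) * p 0 \<le> real C * p 0" using a0 assms(5) by (simp add: mult_right_mono)
  have Cp: "0 < C" using a0 assms(7) by simp
  have 3: "real C * p 0 < t * real C" using Cp assms(6) by (simp add: mult.commute)
  have 4: "0 \<le> real (x 0) * p 0" using assms(5) by simp
  show False using 1 2 3 4 assms(4) by linarith
qed


theorem proposition3p1:
  fixes k :: nat and D :: "real measure" and K :: real
  assumes "1 \<le> k"
    and "prob_space D" and "sets D = sets borel"
    and "AE x in D. 0 \<le> x"
    and "integrable D (\<lambda>x. x)" and "0 < (\<integral>x. x \<partial>D)"
    and "0 < K"
  shows "\<exists>n m c v. valuations n m c v \<and> k \<le> card (bundles m c) \<and>
    (\<forall>selA dq selB.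
       (\<forall>Q\<in>query_profiles n m c k.
          wdp_solution n m c (\<lambda>i. inferred_value m {} (vq_reports (v i) (Q i))) (selA Q))
     \<and> (\<forall>p\<in>space (price_dist m D). \<forall>i<n. dq p i \<in> demand_set m c (v i) p)
     \<and> (\<forall>p\<in>space (price_dist m D).
          wdp_solution n m c (\<lambda>i. inferred_value m {(dq p i, p)} {}) (selB p))
     \<longrightarrow> 0 < expected_welfare_A n m c k v selA
       \<and> ennreal (K * expected_welfare_A n m c k v selA)
           \<le> (\<integral>\<^sup>+ p. ennreal (welfare n v (selB p)) \<partial>price_dist m D))"
proof -
  obtain t where t: "0 < t" "0 < measure D {0<..<t}"
    using pos_interval[OF assms(2-6)] by blast
  define \<delta> where "\<delta> = measure D {0<..<t}"
  have d0: "0 < \<delta>" using t by (simp add: \<delta>_def)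
  define C :: nat where "C = nat \<lceil>K * (1 + k + t * k) / (t * \<delta>)\<rceil> + k + 1"
  have C1: "1 \<le> C" "k \<le> C" unfolding C_def by auto
  have Cbig: "K * (1 + k + t * k) / (t * \<delta>) \<le> real C"
    unfolding C_def by linarith
  then have Cbig2: "K * (1 + k + t * k) \<le> t * real C * \<delta>"
    using t(1) d0 by (simp add: pos_divide_le_eq mult.commute mult.left_commute)
  define c :: "nat \<Rightarrow> nat" where "c = (\<lambda>_. C)"
  define V where "V = 1 + t * real C"
  have V1: "1 \<le> V" using t(1) by (simp add: V_def)
  define B where "B = bundles 1 c"
  define z :: "nat \<Rightarrow> nat" where "z = (\<lambda>_. 0)"
  have fB: "finite B" and cB: "card B = Suc C" using bundles1_card[of C] by (auto simp: B_def c_def)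
  have zB: "z \<in> B" by (simp add: B_def z_def bundles_def)
  define S where "S = B - {z}"
  have cS: "card S = C" using cB zB fB by (simp add: S_def)
  define P where "P = query_profiles 1 1 c k"
  have PQ: "Q 0 \<subseteq> B \<and> card (Q 0) = k" if "Q \<in> P" for Q
    using that by (auto simp: P_def query_profiles_def B_def PiE_iff)
  have fP: "finite P" unfolding P_def query_profiles_def
    by (rule finite_PiE) (use fB in \<open>auto simp: B_def\<close>)
  obtain Q0 where Q0: "Q0 \<subseteq> B" "card Q0 = k"
    using obtain_subset_with_card_n[of k B] cB C1 by auto
  have "(\<lambda>i\<in>{..<1}. Q0) \<in> P" using Q0 by (auto simp: P_def query_profiles_def B_def PiE_iff)
  then have P0: "0 < card P" using fP card_gt_0_iff by blast
  obtain a where aS: "a \<in> S" and acnt: "real (card {Q\<in>P. a \<in> Q 0}) * real C \<le> real k * real (card P)"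
  proof -
    have "S \<subseteq> B" by (auto simp: S_def)
    have "\<exists>a\<in>S. real (card {Q\<in>P. a \<in> Q 0}) * real C \<le> real k * real (card P)"
      by (rule averaging[of P B]) (use fP fB PQ cS C1 \<open>S \<subseteq> B\<close> in auto)
    then show ?thesis using that by auto
  qed
  have aB: "a \<in> B" and a1: "1 \<le> a 0"
  proof -
    show "a \<in> B" using aS by (simp add: S_def)
    have "a \<noteq> z" using aS by (simp add: S_def)
    moreover have "\<forall>j\<ge>1. a j = 0" using \<open>a \<in> B\<close> by (simp add: B_def bundles_def)
    ultimately show "1 \<le> a 0" unfolding z_def
      by (metis fun_eq_iff less_one not_le)
  qed
  define v :: "nat \<Rightarrow> (nat \<Rightarrow> nat) \<Rightarrow> real" where "v = (\<lambda>i x. if x = a then V else 1)"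
  show ?thesis
  proof (intro exI conjI allI impI)
    show "valuations 1 1 c v" unfolding valuations_def v_def using V1 by auto
    show "k \<le> card (bundles 1 c)" using cB C1 by (simp add: B_def)
    fix selA dq selB
    assume H: "(\<forall>Q\<in>query_profiles 1 1 c k.
          wdp_solution 1 1 c (\<lambda>i. inferred_value 1 {} (vq_reports (v i) (Q i))) (selA Q))
     \<and> (\<forall>p\<in>space (price_dist 1 D). \<forall>i<1. dq p i \<in> demand_set 1 c (v i) p)
     \<and> (\<forall>p\<in>space (price_dist 1 D).
          wdp_solution 1 1 c (\<lambda>i. inferred_value 1 {(dq p i, p)} {}) (selB p))"
    have wA: "1 \<le> welfare 1 v (selA Q) \<and> welfare 1 v (selA Q) \<le> 1 + (if a \<in> Q 0 then V else 0)"
      if Q: "Q \<in> P" for Q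
    proof -
      have W: "wdp_solution 1 1 c (\<lambda>i. inferred_value 1 {} (vq_reports (v i) (Q i))) (selA Q)"
        using H Q by (auto simp: P_def)
      from PQ[OF Q] assms(1) have "Q 0 \<noteq> {}" by auto
      then obtain q where q: "q \<in> Q 0" by blast
      then have "q \<in> bundles 1 c" using PQ[OF Q] by (auto simp: B_def)
      from wdp1[OF W this] have "v 0 q \<le> inferred_value 1 {} (vq_reports (v 0) (Q 0)) (selA Q 0)"
        using q by (simp add: iv_vq)
      moreover have "1 \<le> v 0 q" using V1 by (simp add: v_def)
      ultimately have in0: "selA Q 0 \<in> Q 0" and eq: "1 \<le> v 0 (selA Q 0)"
        by (auto simp: iv_vq split: if_splits)
      show ?thesis using in0 eq V1 by (auto simp: welfare_def v_def)
    qed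
    define EA where "EA = expected_welfare_A 1 1 c k v selA"
    have EAdef: "EA = (\<Sum>Q\<in>P. welfare 1 v (selA Q)) / real (card P)"
      by (simp add: EA_def expected_welfare_A_def P_def)
    have sumlo: "real (card P) \<le> (\<Sum>Q\<in>P. welfare 1 v (selA Q))"
      using sum_mono[of P "\<lambda>_. 1::real" "\<lambda>Q. welfare 1 v (selA Q)"] wA by simp
    have "(\<Sum>Q\<in>P. welfare 1 v (selA Q)) \<le> (\<Sum>Q\<in>P. 1 + (if a \<in> Q 0 then V else 0))"
      using wA by (intro sum_mono) auto
    also have "\<dots> = real (card P) + V * real (card {Q\<in>P. a \<in> Q 0})"
      using fP by (simp add: sum.distrib sum.If_cases Int_def)
    finally have sumhi: "(\<Sum>Q\<in>P. welfare 1 v (selA Q)) \<le> real (card P) + V * real (card {Q\<in>P. a \<in> Q 0})" .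
    have "0 < EA" using sumlo P0 by (simp add: EAdef)
    then show "0 < expected_welfare_A 1 1 c k v selA" unfolding EA_def .
    have "EA \<le> 1 + V * real k / real C"
    proof -
      have "V * real (card {Q\<in>P. a \<in> Q 0}) * real C \<le> V * (real k * real (card P))"
        using acnt V1 by (simp add: mult.assoc mult_left_mono)
      then have "V * real (card {Q\<in>P. a \<in> Q 0}) \<le> V * real k * real (card P) / real C"
        using C1 by (simp add: le_divide_eq mult.assoc)
      then have "(\<Sum>Q\<in>P. welfare 1 v (selA Q)) \<le> real (card P) * (1 + V * real k / real C)"
        using sumhi by (simp add: algebra_simps)
      then show ?thesis using P0 by (simp add: EAdef divide_le_eq mult.commute)
    qed
    then have KEA: "K * EA \<le> V * \<delta>"
    proof -
      assume h: "EA \<le> 1 + V * real k / real C"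
      have "V * real k / real C = real k / real C + t * real k"
        using C1 by (simp add: V_def field_simps)
      also have "\<dots> \<le> real k + t * real k"
      proof -
        have "real k * 1 \<le> real k * real C" using C1 by (intro mult_left_mono) auto
        then show ?thesis using C1 by (simp add: divide_le_eq)
      qed
      finally have "EA \<le> 1 + k + t * k" using h by simp
      then have "K * EA \<le> K * (1 + k + t * k)" using assms(7) by simp
      also have "\<dots> \<le> t * real C * \<delta>" by (rule Cbig2)
      also have "\<dots> \<le> V * \<delta>" using d0 by (simp add: V_def)
      finally show ?thesis .
    qed
    define E where "E = {p \<in> space (price_dist 1 D). p 0 \<in> {0<..<t}}"
    have EM: "E \<in> sets (price_dist 1 D)" "emeasure (price_dist 1 D) E = emeasure D {0<..<t}"
      using price_event[OF assms(2,3), of t] by (auto simp: E_def)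
    have point: "ennreal V * indicator E p \<le> ennreal (welfare 1 v (selB p))"
      if p: "p \<in> space (price_dist 1 D)" for p
    proof (cases "p \<in> E")
      case False then show ?thesis by simp
    next
      case True
      then have pp: "0 < p 0" "p 0 < t" by (auto simp: E_def)
      have "dq p 0 \<in> demand_set 1 c (v 0) p" using H p by auto
      then have dqa: "dq p 0 = a"
        using demand1[of "dq p 0" c a V p C t] aB pp a1 by (auto simp: v_def B_def c_def V_def)
      have W: "wdp_solution 1 1 c (\<lambda>i. inferred_value 1 {(dq p i, p)} {}) (selB p)" using H p by auto
      have "inferred_value 1 {(dq p 0, p)} {} a \<le> inferred_value 1 {(dq p 0, p)} {} (selB p 0)"
        using wdp1[OF W, of a] aB by (simp add: B_def)
      moreover have "0 < price_of 1 a p" using pp a1 by (simp add: price_of_def)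
      ultimately have "selB p 0 = a" using dqa by (auto simp: iv_dq split: if_splits)
      then show ?thesis using True by (simp add: welfare_def v_def)
    qed
    have "ennreal (K * EA) \<le> ennreal (V * \<delta>)" using KEA by (simp add: ennreal_leI)
    also have "\<dots> = ennreal V * emeasure D {0<..<t}"
      using V1 d0 finite_measure.emeasure_eq_measure[OF prob_space.axioms(1)[OF assms(2)]]
      by (simp add: \<delta>_def ennreal_mult)
    also have "\<dots> = (\<integral>\<^sup>+ p. ennreal V * indicator E p \<partial>price_dist 1 D)"
      using EM by (simp add: nn_integral_cmult_indicator)
    also have "\<dots> \<le> (\<integral>\<^sup>+ p. ennreal (welfare 1 v (selB p)) \<partial>price_dist 1 D)"
      by (rule nn_integral_mono) (rule point)
    finally show "ennreal (K * expected_welfare_A 1 1 c k v selA)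
           \<le> (\<integral>\<^sup>+ p. ennreal (welfare 1 v (selB p)) \<partial>price_dist 1 D)"
      by (simp add: EA_def)
  qed
qed

end
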